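(* For all integers $n\geq 0$, $i\geq 1$ and $\alpha\geq 0$, $\bar a_{2i}\big(2^\alpha(4n+3)\big)\equiv 0 \pmod 4$.
   Context: For an integer $k\geq 1$ let $f_k:=\prod_{n\geq 1}(1-q^{kn})$. For an integer $c\geq1$, the generalized overcubic partition function $\bar a_c(n)$ is defined by the generating function $\sum_{n\geq 0}\bar a_c(n)q^n=\dfrac{f_4^{c-1}}{f_1^2f_2^{2c-3}}$. *)

theory Defs
  imports "HOL-Computational_Algebra.Formal_Power_Series"
begin

text \<open>f_k = prod_{m>=1} (1 - q^(k m)) as a formal power series over the rationals.
  Since k >= 1, the coefficient of q^n only depends on the factors with m <= n,
  so we take the n-th coefficient of the finite product over m in {1..n}.\<close>
definition eta_f :: "nat \<Rightarrow> rat fps" where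
  "eta_f k = Abs_fps (\<lambda>n. fps_nth (\<Prod>m\<in>{1..n}. (1 - fps_X ^ (k * m))) n)"

text \<open>Generating function f_4^(c-1) / (f_1^2 f_2^(2c-3)); for c = 1 the exponent
  2c-3 = -1 is negative, giving f_2 / f_1^2.\<close>
definition overcubic_gf :: "nat \<Rightarrow> rat fps" where
  "overcubic_gf c =
     (if c \<ge> 2 then eta_f 4 ^ (c - 1) * inverse (eta_f 1 ^ 2 * eta_f 2 ^ (2 * c - 3))
      else eta_f 4 ^ (c - 1) * eta_f 2 * inverse (eta_f 1 ^ 2))"

definition abar :: "nat \<Rightarrow> nat \<Rightarrow> rat" where
  "abar c n = fps_nth (overcubic_gf c) n"

end

theory Submission
  imports Defs
begin

definition ZZ :: "rat fps \<Rightarrow> bool" where "ZZ A \<longleftrightarrow> (\<forall>n. fps_nth A n \<in> \<int>)"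
definition cg :: "rat \<Rightarrow> rat fps \<Rightarrow> rat fps \<Rightarrow> bool" where
  "cg m A B \<longleftrightarrow> (\<exists>Y. ZZ Y \<and> A - B = fps_const m * Y)"

lemma ZZ_0[simp]: "ZZ 0" by (simp add: ZZ_def)
lemma ZZ_1[simp]: "ZZ 1" by (simp add: ZZ_def)
lemma ZZ_const: "c \<in> \<int> \<Longrightarrow> ZZ (fps_const c)" by (simp add: ZZ_def)
lemma ZZ_numeral[simp]: "ZZ (numeral k)" by (simp add: ZZ_def fps_numeral_nth)
lemma ZZ_add[simp]: "ZZ A \<Longrightarrow> ZZ B \<Longrightarrow> ZZ (A + B)" by (simp add: ZZ_def)
lemma ZZ_diff[simp]: "ZZ A \<Longrightarrow> ZZ B \<Longrightarrow> ZZ (A - B)" by (simp add: ZZ_def)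
lemma ZZ_uminus[simp]: "ZZ A \<Longrightarrow> ZZ (- A)" by (simp add: ZZ_def)
lemma ZZ_mult[simp]: "ZZ A \<Longrightarrow> ZZ B \<Longrightarrow> ZZ (A * B)"
  unfolding ZZ_def fps_mult_nth by (auto intro!: Ints_sum Ints_mult)
lemma ZZ_X_power[simp]: "ZZ (fps_X ^ k)" by (simp add: ZZ_def)
lemma ZZ_power[simp]: "ZZ A \<Longrightarrow> ZZ (A ^ k)" by (induction k) auto
lemma ZZ_prod: "(\<And>x. x \<in> S \<Longrightarrow> ZZ (f x)) \<Longrightarrow> ZZ (\<Prod>x\<in>S. f x)"
  by (induction S rule: infinite_finite_induct) auto
lemma ZZ_sum: "(\<And>x. x \<in> S \<Longrightarrow> ZZ (f x)) \<Longrightarrow> ZZ (\<Sum>x\<in>S. f x)"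
  by (induction S rule: infinite_finite_induct) auto

lemma ZZ_inverse:
  assumes "ZZ A" "fps_nth A 0 = 1"
  shows "ZZ (inverse A)"
proof -
  have eq: "inverse A * A = 1" using assms by (intro inverse_mult_eq_1) simp
  have "fps_nth (inverse A) n \<in> \<int>" for n
  proof (induction n rule: less_induct)
    case (less n)
    show ?case
    proof (cases "n = 0")
      case True then show ?thesis using assms by simp
    next
      case False
      then obtain m where m: "n = Suc m" by (cases n) auto
      have "0 = fps_nth (inverse A * A) n" using False eq by simp
      also have "\<dots> = (\<Sum>i=0..m. fps_nth (inverse A) i * fps_nth A (n - i)) + fps_nth (inverse A) n * fps_nth A 0"
        unfolding fps_mult_nth m by (simp add: sum.atLeast0_atMost_Suc)
      finally have "fps_nth (inverse A) n = - (\<Sum>i=0..m. fps_nth (inverse A) i * fps_nth A (n - i))"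
        using assms by (simp add: eq_neg_iff_add_eq_0 add.commute)
      moreover have "(\<Sum>i=0..m. fps_nth (inverse A) i * fps_nth A (n - i)) \<in> \<int>"
        using assms(1) less m by (auto intro!: Ints_sum Ints_mult simp: ZZ_def)
      ultimately show ?thesis by simp
    qed
  qed
  then show ?thesis by (simp add: ZZ_def)
qed

lemma cg_refl[simp]: "cg m A A" unfolding cg_def by (rule exI[of _ 0]) simp
lemma cg_sym: "cg m A B \<Longrightarrow> cg m B A"
  unfolding cg_def
proof (elim exE conjE)
  fix Y assume "ZZ Y" "A - B = fps_const m * Y"
  moreover have "B - A = - (A - B)" by simp
  ultimately show "\<exists>Y. ZZ Y \<and> B - A = fps_const m * Y" by (intro exI[of _ "- Y"]) simp
qed
lemma cg_trans: "cg m A B \<Longrightarrow> cg m B C \<Longrightarrow> cg m A C"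
  unfolding cg_def
proof (elim exE conjE)
  fix Y Z assume "ZZ Y" "A - B = fps_const m * Y" "ZZ Z" "B - C = fps_const m * Z"
  then show "\<exists>Y. ZZ Y \<and> A - C = fps_const m * Y"
    by (intro exI[of _ "Y + Z"]) (auto simp: algebra_simps dest: sym)
qed
lemma cg_add: "cg m A B \<Longrightarrow> cg m C D \<Longrightarrow> cg m (A + C) (B + D)"
  unfolding cg_def
proof (elim exE conjE)
  fix Y Z assume "ZZ Y" "A - B = fps_const m * Y" "ZZ Z" "C - D = fps_const m * Z"
  then show "\<exists>Y. ZZ Y \<and> A + C - (B + D) = fps_const m * Y"
    by (intro exI[of _ "Y + Z"]) (auto simp: algebra_simps dest: sym)
qed
lemma cg_diff: "cg m A B \<Longrightarrow> cg m C D \<Longrightarrow> cg m (A - C) (B - D)"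
  unfolding cg_def
proof (elim exE conjE)
  fix Y Z assume "ZZ Y" "A - B = fps_const m * Y" "ZZ Z" "C - D = fps_const m * Z"
  then show "\<exists>Y. ZZ Y \<and> A - C - (B - D) = fps_const m * Y"
    by (intro exI[of _ "Y - Z"]) (auto simp: algebra_simps dest: sym)
qed
lemma cg_mult: "cg m A B \<Longrightarrow> cg m C D \<Longrightarrow> ZZ B \<Longrightarrow> ZZ C \<Longrightarrow> cg m (A * C) (B * D)"
  unfolding cg_def
proof (elim exE conjE)
  fix Y Z assume h: "ZZ Y" "A - B = fps_const m * Y" "ZZ Z" "C - D = fps_const m * Z" "ZZ B" "ZZ C"
  have "A * C - B * D = (A - B) * C + B * (C - D)" by (simp add: algebra_simps)
  also have "\<dots> = fps_const m * (Y * C + B * Z)" unfolding h(2,4) by (simp add: algebra_simps)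
  finally show "\<exists>Y. ZZ Y \<and> A * C - (B * D) = fps_const m * Y"
    using h by (intro exI[of _ "Y * C + B * Z"]) auto
qed
lemma cg_ZZ: "cg m A B \<Longrightarrow> ZZ B \<Longrightarrow> m \<in> \<int> \<Longrightarrow> ZZ A"
  unfolding cg_def
proof (elim exE conjE)
  fix Y assume "ZZ Y" "A - B = fps_const m * Y" "ZZ B" "m \<in> \<int>"
  moreover have "A = B + (A - B)" by simp
  ultimately show "ZZ A" by (metis ZZ_add ZZ_mult ZZ_const)
qed
lemma cg_power: "cg m A B \<Longrightarrow> ZZ A \<Longrightarrow> ZZ B \<Longrightarrow> cg m (A ^ k) (B ^ k)"
  by (induction k) (auto intro: cg_mult)
lemma cg_prod: "(\<And>x. x \<in> S \<Longrightarrow> cg m (f x) (g x)) \<Longrightarrow> (\<And>x. x \<in> S \<Longrightarrow> ZZ (f x)) \<Longrightarrow>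
   (\<And>x. x \<in> S \<Longrightarrow> ZZ (g x)) \<Longrightarrow> cg m (\<Prod>x\<in>S. f x) (\<Prod>x\<in>S. g x)"
  by (induction S rule: infinite_finite_induct) (auto intro!: cg_mult ZZ_prod)
lemma cg_inverse:
  assumes "cg m A B" "ZZ A" "ZZ B" "fps_nth A 0 = 1" "fps_nth B 0 = 1"
  shows "cg m (inverse A) (inverse B)"
proof -
  have iA: "inverse A * A = 1" and iB: "inverse B * B = 1" using assms(4,5) by (auto intro!: inverse_mult_eq_1)
  have "inverse A * inverse B * (B - A) = inverse A * (inverse B * B) - inverse B * (inverse A * A)"
    by (simp add: right_diff_distrib mult_ac)
  also have "\<dots> = inverse A - inverse B" by (simp add: iA iB)
  finally have e: "inverse A - inverse B = inverse A * inverse B * (B - A)" by simp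
  obtain Y where Y: "ZZ Y" "A - B = fps_const m * Y" using assms(1) by (auto simp: cg_def)
  have "B - A = - (A - B)" by simp
  then have "inverse A - inverse B = fps_const m * (- (inverse A * inverse B * Y))"
    unfolding e Y(2) by (simp add: mult_ac)
  then show ?thesis unfolding cg_def using assms ZZ_inverse Y(1)
    by (intro exI[of _ "- (inverse A * inverse B * Y)"]) simp
qed
lemma cg_iff_nth: "m \<noteq> 0 \<Longrightarrow> cg m A B \<longleftrightarrow> (\<forall>n. (fps_nth A n - fps_nth B n) / m \<in> \<int>)"
proof
  assume "m \<noteq> 0" "cg m A B"
  then obtain Y where "ZZ Y" "A - B = fps_const m * Y" by (auto simp: cg_def)
  then have "fps_nth A n - fps_nth B n = m * fps_nth Y n" for n
    by (metis fps_const_mult_left fps_nth_Abs_fps diff_conv_add_uminus fps_add_nth fps_neg_nth)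
  then show "\<forall>n. (fps_nth A n - fps_nth B n) / m \<in> \<int>" using \<open>m \<noteq> 0\<close> \<open>ZZ Y\<close> by (simp add: ZZ_def)
next
  assume "m \<noteq> 0" "\<forall>n. (fps_nth A n - fps_nth B n) / m \<in> \<int>"
  then show "cg m A B" unfolding cg_def
    by (intro exI[of _ "fps_const (1/m) * (A - B)"]) (auto simp: ZZ_def fps_eq_iff)
qed
lemma fc4: "fps_const (4::rat) = fps_const 2 * fps_const 2" by (simp add: fps_const_mult)
lemma fc4': "fps_const (4::rat) = 2 * fps_const 2" by (simp add: numeral_fps_const fps_const_mult)
lemma sq_aux: "A - B = c * Y \<Longrightarrow> A^2 - B^2 = (c * c) * (Y * Y) + (2 * c) * (B * Y)"
  for A B c Y :: "rat fps"
proof -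
  assume "A - B = c * Y"
  then have "A = B + c * Y" by (metis add.commute diff_add_cancel)
  then show ?thesis by (simp add: power2_eq_square algebra_simps)
qed
lemma cg2_sq: assumes "cg 2 A B" "ZZ B" shows "cg 4 (A^2) (B^2)"
proof -
  obtain Y where Y: "ZZ Y" "A - B = fps_const 2 * Y" using assms by (auto simp: cg_def)
  have "A^2 - B^2 = fps_const 4 * (Y * Y) + fps_const 4 * (B * Y)"
    using sq_aux[OF Y(2)] unfolding fc4[symmetric] fc4'[symmetric] .
  also have "\<dots> = fps_const 4 * (Y * Y + B * Y)" by (simp add: algebra_simps)
  finally show ?thesis unfolding cg_def using assms Y by (intro exI[of _ "Y * Y + B * Y"]) simp
qed
lemma cg2_times2: assumes "cg 2 A B" shows "cg 4 (fps_const 2 * A) (fps_const 2 * B)"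
proof -
  obtain Y where Y: "ZZ Y" "A - B = fps_const 2 * Y" using assms by (auto simp: cg_def)
  have "fps_const 2 * A - fps_const 2 * B = fps_const 2 * (A - B)" by (simp add: algebra_simps)
  also have "\<dots> = fps_const 4 * Y" unfolding Y fc4 by (simp add: mult_ac)
  finally show ?thesis unfolding cg_def using Y by blast
qed

definition PP :: "nat \<Rightarrow> nat \<Rightarrow> rat fps" where
  "PP k N = (\<Prod>m\<in>{1..N}. (1 - fps_X ^ (k * m)))"

definition teq :: "nat \<Rightarrow> rat fps \<Rightarrow> rat fps \<Rightarrow> bool" where
  "teq n A B \<longleftrightarrow> (\<forall>j\<le>n. fps_nth A j = fps_nth B j)"

lemma teq_refl[simp]: "teq n A A" by (simp add: teq_def)
lemma teq_sym: "teq n A B \<Longrightarrow> teq n B A" by (simp add: teq_def)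
lemma teq_trans: "teq n A B \<Longrightarrow> teq n B C \<Longrightarrow> teq n A C" by (simp add: teq_def)
lemma teq_mult: "teq n A B \<Longrightarrow> teq n C D \<Longrightarrow> teq n (A * C) (B * D)"
  unfolding teq_def fps_mult_nth by (auto intro!: sum.cong)
lemma teq_add: "teq n A B \<Longrightarrow> teq n C D \<Longrightarrow> teq n (A + C) (B + D)"
  unfolding teq_def by auto
lemma teq_diff: "teq n A B \<Longrightarrow> teq n C D \<Longrightarrow> teq n (A - C) (B - D)"
  unfolding teq_def by auto
lemma teq_power: "teq n A B \<Longrightarrow> teq n (A ^ k) (B ^ k)"
  by (induction k) (auto intro: teq_mult)

lemma PP_Suc: "PP k (Suc N) = PP k N * (1 - fps_X ^ (k * Suc N))"
  unfolding PP_def by (simp add: prod.cl_ivl_Suc)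

lemma PP_stable: assumes "k \<ge> 1" "n \<le> N" shows "fps_nth (PP k N) n = fps_nth (PP k n) n"
  using assms(2)
proof (induction N rule: dec_induct)
  case (step N)
  have "1 * Suc N \<le> k * Suc N" using assms by (intro mult_le_mono1)
  then have "n < k * Suc N" using step by simp
  then have "fps_nth (PP k N * fps_X ^ (k * Suc N)) n = 0" by (simp add: fps_X_power_mult_right_nth)
  then show ?case unfolding PP_Suc using step by (simp add: right_diff_distrib)
qed simp

lemma eta_teq: assumes "k \<ge> 1" "n \<le> N" shows "teq n (eta_f k) (PP k N)"
  unfolding teq_def eta_f_def
proof (intro allI impI)
  fix j assume "j \<le> n"
  then show "fps_nth (Abs_fps (\<lambda>n. fps_nth (\<Prod>m\<in>{1..n}. 1 - fps_X ^ (k * m)) n)) j = fps_nth (PP k N) j"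
    using PP_stable[OF assms(1), of j N] assms by (simp add: PP_def)
qed

lemma ZZ_PP: "ZZ (PP k N)" unfolding PP_def by (auto intro!: ZZ_prod)
lemma ZZ_eta: "ZZ (eta_f k)" unfolding ZZ_def eta_f_def using ZZ_PP unfolding PP_def ZZ_def by simp
lemma eta0: "fps_nth (eta_f k) 0 = 1" unfolding eta_f_def by simp

lemma cg_lift:
  assumes "m \<noteq> 0" "\<And>n. \<exists>A' B'. teq n A A' \<and> teq n B B' \<and> cg m A' B'"
  shows "cg m A B"
proof -
  have "(fps_nth A n - fps_nth B n) / m \<in> \<int>" for n
  proof -
    obtain A' B' where "teq n A A'" "teq n B B'" "cg m A' B'" using assms(2) by blast
    then show ?thesis using cg_iff_nth[OF assms(1)] by (auto simp: teq_def)
  qed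
  then show ?thesis using cg_iff_nth[OF assms(1)] by blast
qed

lemma factor_sq2: "cg 2 ((1 - fps_X ^ j)^2) (1 - fps_X ^ (2 * j))"
proof -
  have "(1 - fps_X ^ j)^2 - (1 - fps_X ^ (2 * j)) = fps_const 2 * (fps_X ^ (2 * j) - fps_X ^ j :: rat fps)"
    by (simp add: power2_eq_square algebra_simps power_mult_distrib numeral_fps_const
        flip: power_add mult_2)
  then show ?thesis unfolding cg_def by (intro exI[of _ "fps_X ^ (2 * j) - fps_X ^ j"]) simp
qed

lemma PP_sq2: "cg 2 ((PP k N)^2) (PP (2 * k) N)"
proof -
  have "(PP k N)^2 = (\<Prod>m\<in>{1..N}. (1 - fps_X ^ (k * m))^2)" unfolding PP_def by (simp add: prod_power_distrib)
  moreover have "PP (2 * k) N = (\<Prod>m\<in>{1..N}. (1 - fps_X ^ (2 * (k * m))))" unfolding PP_def by (simp add: mult.assoc)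
  ultimately show ?thesis by (auto intro!: cg_prod factor_sq2)
qed

lemma eta_sq2: assumes "k \<ge> 1" shows "cg 2 ((eta_f k)^2) (eta_f (2 * k))"
proof (rule cg_lift)
  fix n show "\<exists>A' B'. teq n (eta_f k ^ 2) A' \<and> teq n (eta_f (2 * k)) B' \<and> cg 2 A' B'"
    using assms by (intro exI[of _ "(PP k n)^2"] exI[of _ "PP (2 * k) n"]) (auto intro!: teq_power eta_teq PP_sq2)
qed simp

definition vv :: "nat \<Rightarrow> rat fps" where
  "vv j = Abs_fps (\<lambda>n. if n > 0 \<and> j dvd n then 1 else 0)"

definition DD :: "rat fps" where
  "DD = Abs_fps (\<lambda>n. if n = 0 then 0 else of_nat (card {d. d dvd n}))"

lemma fc2n: "fps_const (2::rat) = 2" by (simp add: numeral_fps_const)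
lemma fc4n: "fps_const (4::rat) = 4" by (simp add: numeral_fps_const)
lemma ZZ_fc2[simp]: "ZZ (fps_const 2)" by (simp add: ZZ_def)
lemma ZZ_vv[simp]: "ZZ (vv j)" by (simp add: ZZ_def vv_def)
lemma ZZ_DD: "ZZ DD" by (simp add: ZZ_def DD_def)

lemma vv_eq: assumes "j \<ge> 1" shows "(1 - fps_X ^ j) * vv j = fps_X ^ j"
proof (rule fps_ext)
  fix n
  have "fps_nth ((1 - fps_X ^ j) * vv j) n = fps_nth (vv j) n - fps_nth (fps_X ^ j * vv j) n"
    by (simp add: left_diff_distrib)
  also have "\<dots> = fps_nth (fps_X ^ j) n"
  proof (cases "n < j")
    case True
    have "\<not> (n > 0 \<and> j dvd n)" using True by (auto dest: dvd_imp_le)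
    then show ?thesis using True by (simp add: fps_X_power_mult_nth vv_def)
  next
    case False
    show ?thesis
    proof (cases "n = j")
      case True then show ?thesis using assms by (simp add: fps_X_power_mult_nth vv_def)
    next
      case ne: False
      with False have nj: "n > j" by simp
      have "j dvd n \<longleftrightarrow> j dvd (n - j)"
        using nj by (metis dvd_add_right_iff dvd_refl le_add_diff_inverse less_imp_le_nat)
      then show ?thesis using nj ne by (simp add: fps_X_power_mult_nth vv_def)
    qed
  qed
  finally show "fps_nth ((1 - fps_X ^ j) * vv j) n = fps_nth (fps_X ^ j) n" .
qed

lemma factor_gauss: assumes "j \<ge> 1"
  shows "cg 4 ((1 - fps_X ^ j)^2) ((1 - fps_X ^ (2 * j)) * (1 - fps_const 2 * vv j))"
proof -
  define x :: "rat fps" where "x = fps_X ^ j"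
  have e: "(1 - x) * vv j = x" using vv_eq[OF assms] by (simp add: x_def)
  have x2: "fps_X ^ (2 * j) = x * x" by (simp add: x_def power_mult_distrib mult_2 power_add)
  have "(1 - fps_X ^ (2 * j)) * (1 - fps_const 2 * vv j) = (1 - x * x) - fps_const 2 * (1 + x) * ((1 - x) * vv j)"
    unfolding x2 by (simp add: algebra_simps)
  also have "\<dots> = (1 - x * x) - fps_const 2 * (1 + x) * x" unfolding e ..
  finally have eq: "(1 - fps_X ^ (2 * j)) * (1 - fps_const 2 * vv j) = (1 - x * x) - fps_const 2 * (1 + x) * x" .
  have "(1 - x)^2 - ((1 - x * x) - fps_const 2 * (1 + x) * x) = fps_const 4 * (x * x)"
    by (simp add: algebra_simps power2_eq_square fc2n fc4n)
  then have "(1 - x)^2 - (1 - fps_X ^ (2 * j)) * (1 - fps_const 2 * vv j) = fps_const 4 * (x * x)"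
    unfolding eq .
  then show ?thesis unfolding cg_def x_def by (intro exI[of _ "fps_X ^ j * fps_X ^ j"]) simp
qed

lemma ring_aux1: "(1 - 2 * a) * (1 - 2 * v) - (1 - 2 * (a + v)) = 4 * (a * v :: 'a :: comm_ring_1)"
  by (simp add: algebra_simps)

lemma prod_one_minus: "finite S \<Longrightarrow> (\<And>m. m \<in> S \<Longrightarrow> ZZ (f m)) \<Longrightarrow>
   cg 4 (\<Prod>m\<in>S. (1 - fps_const 2 * f m)) (1 - fps_const 2 * (\<Sum>m\<in>S. f m))"
proof (induction S rule: finite_induct)
  case (insert a S)
  define V where "V = (\<Sum>m\<in>S. f m)"
  have ZV: "ZZ V" using insert by (auto simp: V_def intro!: ZZ_sum)
  have c1: "cg 4 ((1 - fps_const 2 * f a) * (\<Prod>m\<in>S. (1 - fps_const 2 * f m))) ((1 - fps_const 2 * f a) * (1 - fps_const 2 * V))"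
  proof (rule cg_mult)
    show "cg 4 (\<Prod>m\<in>S. (1 - fps_const 2 * f m)) (1 - fps_const 2 * V)" using insert.IH insert.prems
      by (simp add: V_def)
    have "ZZ (f a)" using insert.prems by simp
    then show "ZZ (1 - fps_const 2 * f a)" by simp
    show "ZZ (\<Prod>m\<in>S. (1 - fps_const 2 * f m))" using insert.prems by (intro ZZ_prod) simp
  qed simp
  have "(1 - fps_const 2 * f a) * (1 - fps_const 2 * V) - (1 - fps_const 2 * (f a + V)) = fps_const 4 * (f a * V)"
    unfolding fc2n fc4n by (rule ring_aux1)
  then have c2: "cg 4 ((1 - fps_const 2 * f a) * (1 - fps_const 2 * V)) (1 - fps_const 2 * (f a + V))"
    unfolding cg_def using insert ZV by (intro exI[of _ "f a * V"]) auto
  have p: "(\<Prod>m\<in>insert a S. (1 - fps_const 2 * f m)) = (1 - fps_const 2 * f a) * (\<Prod>m\<in>S. (1 - fps_const 2 * f m))"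
    using insert by simp
  have s: "(\<Sum>m\<in>insert a S. f m) = f a + V" using insert by (simp add: V_def)
  show ?case unfolding p s by (rule cg_trans[OF c1 c2])
qed simp

lemma PP_gauss: "cg 4 ((PP 1 N)^2) (PP 2 N * (1 - fps_const 2 * (\<Sum>m\<in>{1..N}. vv m)))"
proof -
  have e1: "(PP 1 N)^2 = (\<Prod>m\<in>{1..N}. (1 - fps_X ^ m)^2)" unfolding PP_def
    by (simp only: prod_power_distrib mult_1)
  have c1: "cg 4 (\<Prod>m\<in>{1..N}. (1 - fps_X ^ m)^2) (\<Prod>m\<in>{1..N}. (1 - fps_X ^ (2 * m)) * (1 - fps_const 2 * vv m))"
  proof (rule cg_prod)
    fix m assume "m \<in> {1..N}"
    then show "cg 4 ((1 - fps_X ^ m)^2) ((1 - fps_X ^ (2 * m)) * (1 - fps_const 2 * vv m))"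
      by (intro factor_gauss) simp
  qed simp_all
  have e2: "(\<Prod>m\<in>{1..N}. (1 - fps_X ^ (2 * m)) * (1 - fps_const 2 * vv m)) = PP 2 N * (\<Prod>m\<in>{1..N}. (1 - fps_const 2 * vv m))"
    unfolding PP_def by (simp only: prod.distrib)
  have c2: "cg 4 (PP 2 N * (\<Prod>m\<in>{1..N}. (1 - fps_const 2 * vv m))) (PP 2 N * (1 - fps_const 2 * (\<Sum>m\<in>{1..N}. vv m)))"
  proof (rule cg_mult)
    show "cg 4 (\<Prod>m\<in>{1..N}. (1 - fps_const 2 * vv m)) (1 - fps_const 2 * (\<Sum>m\<in>{1..N}. vv m))"
      by (rule prod_one_minus) simp_all
    show "ZZ (\<Prod>m\<in>{1..N}. (1 - fps_const 2 * vv m))" by (intro ZZ_prod) simp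
  qed (simp_all add: ZZ_PP)
  show ?thesis unfolding e1 using cg_trans[OF c1 c2[folded e2]] .
qed

lemma DD_teq: "teq n DD (\<Sum>m\<in>{1..n}. vv m)"
  unfolding teq_def
proof (intro allI impI)
  fix j assume j: "j \<le> n"
  show "fps_nth DD j = fps_nth (\<Sum>m\<in>{1..n}. vv m) j"
  proof (cases "j = 0")
    case True then show ?thesis by (simp add: DD_def vv_def fps_sum_nth)
  next
    case False
    have seq: "{1..n} \<inter> {m. m dvd j} = {d. d dvd j}"
    proof (intro set_eqI iffI)
      fix d assume "d \<in> {d. d dvd j}"
      then have "d dvd j" by simp
      moreover have "0 < d" using False \<open>d dvd j\<close> by (metis dvd_0_left_iff neq0_conv)
      moreover have "d \<le> j" using False \<open>d dvd j\<close> by (simp add: dvd_imp_le)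
      ultimately show "d \<in> {1..n} \<inter> {m. m dvd j}" using j by auto
    qed auto
    have "fps_nth (\<Sum>m\<in>{1..n}. vv m) j = (\<Sum>m\<in>{1..n}. fps_nth (vv m) j)" by (rule fps_sum_nth)
    also have "\<dots> = (\<Sum>m\<in>{1..n}. if m dvd j then (1::rat) else 0)"
      using False by (intro sum.cong refl) (simp add: vv_def)
    also have "\<dots> = (\<Sum>m\<in>{1..n} \<inter> {m. m dvd j}. 1) + (\<Sum>m\<in>{1..n} \<inter> - {m. m dvd j}. 0)"
      by (rule sum.If_cases) simp
    also have "\<dots> = of_nat (card {d. d dvd j})" unfolding seq by simp
    finally show ?thesis using False by (simp add: DD_def)
  qed
qed

definition phi :: "rat fps" where "phi = 1 - fps_const 2 * DD"

lemma eta_gauss: "cg 4 ((eta_f 1)^2) (eta_f 2 * phi)"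
proof (rule cg_lift)
  fix n
  have "teq n (eta_f 1 ^ 2) ((PP 1 n)^2)" by (intro teq_power eta_teq) auto
  moreover have "teq n (eta_f 2 * phi) (PP 2 n * (1 - fps_const 2 * (\<Sum>m\<in>{1..n}. vv m)))"
    unfolding phi_def by (intro teq_mult teq_diff eta_teq DD_teq) auto
  ultimately show "\<exists>A' B'. teq n (eta_f 1 ^ 2) A' \<and> teq n (eta_f 2 * phi) B' \<and> cg 4 A' B'"
    using PP_gauss by blast
qed simp

definition dil :: "rat fps \<Rightarrow> rat fps" where
  "dil A = Abs_fps (\<lambda>n. if even n then fps_nth A (n div 2) else 0)"

lemma dil_even[simp]: "fps_nth (dil A) (2 * m) = fps_nth A m" by (simp add: dil_def)
lemma dil_odd: "odd n \<Longrightarrow> fps_nth (dil A) n = 0" by (simp add: dil_def)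
lemma dil_gen: "(\<And>m. fps_nth B (2 * m) = fps_nth A m) \<Longrightarrow> (\<And>n. odd n \<Longrightarrow> fps_nth B n = 0) \<Longrightarrow> dil A = B"
proof (rule fps_ext)
  fix n assume h: "\<And>m. fps_nth B (2 * m) = fps_nth A m" "\<And>n. odd n \<Longrightarrow> fps_nth B n = 0"
  show "fps_nth (dil A) n = fps_nth B n"
  proof (cases "even n")
    case True
    then obtain m where "n = 2 * m" by (elim evenE)
    then show ?thesis using h(1)[of m] by simp
  qed (simp add: dil_odd h(2))
qed
lemma dil_1[simp]: "dil 1 = 1" by (rule dil_gen) (auto simp: odd_pos)
lemma dil_add: "dil (A + B) = dil A + dil B" by (rule fps_ext) (simp add: dil_def)
lemma dil_diff: "dil (A - B) = dil A - dil B" by (rule fps_ext) (simp add: dil_def)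
lemma dil_X_power: "dil (fps_X ^ j) = fps_X ^ (2 * j)" by (rule dil_gen) auto

lemma dil_mult: "dil (A * B) = dil A * dil B"
proof (rule fps_ext)
  fix n
  define g where "g i = fps_nth (dil A) i * fps_nth (dil B) (n - i)" for i
  have "fps_nth (dil A * dil B) n = (\<Sum>i\<in>{0..n}. g i)" by (simp add: fps_mult_nth g_def)
  show "fps_nth (dil (A * B)) n = fps_nth (dil A * dil B) n"
  proof (cases "even n")
    case False
    have "g i = 0" if "i \<in> {0..n}" for i
    proof (cases "even i")
      case True
      then have "odd (n - i)" using False that by auto
      then show ?thesis by (simp add: g_def dil_odd)
    qed (simp add: g_def dil_odd)
    then have "(\<Sum>i\<in>{0..n}. g i) = 0" by simp
    then show ?thesis using False \<open>fps_nth (dil A * dil B) n = (\<Sum>i\<in>{0..n}. g i)\<close> by (simp add: dil_odd)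
  next
    case True
    then obtain m where m: "n = 2 * m" by (elim evenE)
    have sub: "(\<lambda>x. 2 * x) ` {0..m} \<subseteq> {0..n}" using m by auto
    have z: "g i = 0" if "i \<in> {0..n} - (\<lambda>x. 2 * x) ` {0..m}" for i
    proof -
      have "odd i"
      proof
        assume "even i" then obtain x where "i = 2 * x" by (elim evenE)
        then show False using that m by auto
      qed
      then show ?thesis by (simp add: g_def dil_odd)
    qed
    have "(\<Sum>i\<in>{0..n}. g i) = (\<Sum>i\<in>(\<lambda>x. 2 * x) ` {0..m}. g i)"
      using sub z by (intro sum.mono_neutral_right) auto
    also have "\<dots> = (\<Sum>x\<in>{0..m}. g (2 * x))" by (subst sum.reindex) (auto simp: inj_on_def)
    also have "\<dots> = (\<Sum>x\<in>{0..m}. fps_nth A x * fps_nth B (m - x))"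
    proof (rule sum.cong)
      fix x assume "x \<in> {0..m}"
      then have "n - 2 * x = 2 * (m - x)" using m by simp
      then show "g (2 * x) = fps_nth A x * fps_nth B (m - x)" by (simp add: g_def)
    qed simp
    also have "\<dots> = fps_nth (dil (A * B)) n" using m by (simp add: fps_mult_nth)
    finally show ?thesis using \<open>fps_nth (dil A * dil B) n = (\<Sum>i\<in>{0..n}. g i)\<close> by simp
  qed
qed

lemma dil_power: "dil (A ^ k) = dil A ^ k" by (induction k) (simp_all add: dil_mult)
lemma dil_prod: "finite S \<Longrightarrow> dil (\<Prod>x\<in>S. f x) = (\<Prod>x\<in>S. dil (f x))"
  by (induction S rule: finite_induct) (simp_all add: dil_mult)

lemma dil_inverse: assumes "fps_nth A 0 \<noteq> 0" shows "dil (inverse A) = inverse (dil A)"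
proof -
  have d0: "fps_nth (dil A) 0 \<noteq> 0" using assms dil_even[of A 0] by simp
  have i1: "inverse A * A = 1" using assms by (rule inverse_mult_eq_1)
  have e: "dil (inverse A) * dil A = 1" by (simp only: dil_mult[symmetric] i1 dil_1)
  have "dil (inverse A) = dil (inverse A) * (dil A * inverse (dil A))"
    using inverse_mult_eq_1'[OF d0] by (simp only: mult_1_right)
  also have "\<dots> = (dil (inverse A) * dil A) * inverse (dil A)" by (simp only: mult.assoc)
  also have "\<dots> = inverse (dil A)" by (simp only: e mult_1_left)
  finally show ?thesis .
qed

lemma dil_PP: "dil (PP k N) = PP (2 * k) N"
proof -
  have "dil (PP k N) = (\<Prod>m\<in>{1..N}. dil (1 - fps_X ^ (k * m)))" unfolding PP_def by (rule dil_prod) simp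
  also have "\<dots> = (\<Prod>m\<in>{1..N}. 1 - fps_X ^ (2 * k * m))"
    by (intro prod.cong refl) (simp only: dil_diff dil_1 dil_X_power mult.assoc)
  finally show ?thesis unfolding PP_def .
qed

lemma dil_eta: assumes "k \<ge> 1" shows "dil (eta_f k) = eta_f (2 * k)"
proof (rule fps_ext)
  fix n
  have "fps_nth (eta_f (2 * k)) n = fps_nth (PP (2 * k) n) n"
    using eta_teq[of "2 * k" n n] assms by (simp add: teq_def)
  also have "\<dots> = fps_nth (dil (PP k n)) n" by (simp add: dil_PP)
  also have "\<dots> = fps_nth (dil (eta_f k)) n"
  proof (cases "even n")
    case True
    then obtain m where m: "n = 2 * m" by (elim evenE)
    then show ?thesis using eta_teq[of k m n] assms by (simp add: teq_def)
  qed (simp add: dil_odd)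
  finally show "fps_nth (dil (eta_f k)) n = fps_nth (eta_f (2 * k)) n" by simp
qed

lemma cg_inv_phi_aux: "cg 4 (phi * phi) 1"
proof -
  have "phi * phi - 1 = fps_const 4 * (DD * DD - DD)"
    unfolding phi_def fc2n fc4n by (simp add: algebra_simps)
  then show ?thesis unfolding cg_def using ZZ_DD by (intro exI[of _ "DD * DD - DD"]) simp
qed

lemma phi0: "fps_nth phi 0 = 1" by (simp add: phi_def DD_def)
lemma ZZ_phi: "ZZ phi" unfolding phi_def using ZZ_DD by simp

lemma cg_inv_phi: "cg 4 (inverse phi) phi"
proof -
  have i: "inverse phi * phi = 1" using phi0 by (intro inverse_mult_eq_1) simp
  have "cg 4 (inverse phi * 1) (inverse phi * (phi * phi))"
    by (rule cg_mult[OF cg_refl cg_sym[OF cg_inv_phi_aux]]) (use phi0 ZZ_phi ZZ_inverse in auto)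
  moreover have "inverse phi * (phi * phi) = phi" by (simp only: mult.assoc[symmetric] i mult_1_left)
  ultimately show ?thesis by simp
qed

definition KK :: "rat fps" where "KK = eta_f 4 * inverse (eta_f 2 ^ 2)"
definition LL :: "rat fps" where "LL = eta_f 2 * inverse (eta_f 1 ^ 2)"

lemma pow0: "fps_nth (eta_f k ^ j) 0 = 1" by (simp add: eta0 fps_nth_power_0)

lemma ZZ_KK: "ZZ KK" unfolding KK_def using ZZ_eta pow0 by (intro ZZ_mult ZZ_inverse ZZ_power) auto
lemma ZZ_LL: "ZZ LL" unfolding LL_def using ZZ_eta pow0 by (intro ZZ_mult ZZ_inverse ZZ_power) auto

lemma dil_LL: "dil LL = KK"
proof -
  have "dil LL = dil (eta_f 2) * inverse (dil (eta_f 1) ^ 2)"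
    unfolding LL_def dil_mult using pow0[of 1 2] by (simp add: dil_inverse dil_power)
  also have "\<dots> = KK" unfolding KK_def using dil_eta[of 1] dil_eta[of 2] by simp
  finally show ?thesis .
qed

lemma KK_cg2: "cg 2 KK 1"
proof -
  have "cg 2 (inverse (eta_f 2 ^ 2)) (inverse (eta_f 4))"
    using eta_sq2[of 2] by (intro cg_inverse) (auto simp: ZZ_eta pow0 eta0)
  then have "cg 2 (eta_f 4 * inverse (eta_f 2 ^ 2)) (eta_f 4 * inverse (eta_f 4))"
    by (intro cg_mult) (auto simp: ZZ_eta pow0 intro!: ZZ_inverse)
  moreover have "eta_f 4 * inverse (eta_f 4) = 1" using eta0 by (intro inverse_mult_eq_1') simp
  ultimately show ?thesis unfolding KK_def by simp
qed

lemma LL_cg: "cg 4 LL phi"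
proof -
  have "cg 4 (inverse (eta_f 1 ^ 2)) (inverse (eta_f 2 * phi))"
    using eta_gauss by (intro cg_inverse) (auto simp: ZZ_eta pow0 eta0 phi0 ZZ_phi)
  then have "cg 4 (eta_f 2 * inverse (eta_f 1 ^ 2)) (eta_f 2 * inverse (eta_f 2 * phi))"
    by (intro cg_mult) (auto simp: ZZ_eta intro!: ZZ_inverse pow0)
  moreover have "eta_f 2 * inverse (eta_f 2 * phi) = inverse phi"
  proof -
    have "eta_f 2 * inverse (eta_f 2 * phi) = (eta_f 2 * inverse (eta_f 2)) * inverse phi"
      by (simp add: fps_inverse_mult mult.assoc)
    also have "eta_f 2 * inverse (eta_f 2) = 1" using eta0 by (intro inverse_mult_eq_1') simp
    finally show ?thesis by simp
  qed
  ultimately have "cg 4 LL (inverse phi)" unfolding LL_def by simp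
  then show ?thesis using cg_inv_phi by (rule cg_trans)
qed

lemma G_cg:
  assumes "i \<ge> 1"
  shows "cg 4 (overcubic_gf (2 * i)) (KK - fps_const 2 * DD)"
proof -
  define a where "a = i - 1"
  define f1 where "f1 = eta_f 1"
  define f2 where "f2 = eta_f 2"
  define f4 where "f4 = eta_f 4"
  have Z: "ZZ f1" "ZZ f2" "ZZ f4" by (simp_all add: f1_def f2_def f4_def ZZ_eta)
  have z: "fps_nth f1 0 = 1" "fps_nth f2 0 = 1" "fps_nth f4 0 = 1" by (simp_all add: f1_def f2_def f4_def eta0)
  have G: "overcubic_gf (2 * i) = f4 ^ (2 * a + 1) * inverse (f1^2 * f2 ^ (4 * a + 1))"
  proof -
    have "2 * i - 1 = 2 * a + 1" "2 * (2 * i) - 3 = 4 * a + 1" using assms by (simp_all add: a_def)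
    then show ?thesis using assms unfolding overcubic_gf_def f1_def f2_def f4_def by simp
  qed
  define Den where "Den = f1^2 * f2 * ((f2^2)^2)^a"
  define Den' where "Den' = (f2 * phi) * f2 * (f4^2)^a"
  have eDen: "f1^2 * f2 ^ (4 * a + 1) = Den"
    unfolding Den_def by (simp add: power_add mult_ac flip: power_mult)
  have c4b: "cg 4 ((f2^2)^2) (f4^2)" unfolding f2_def f4_def
    using eta_sq2[of 2] by (intro cg2_sq) (simp_all add: ZZ_eta)
  have cDen: "cg 4 Den Den'" unfolding Den_def Den'_def
  proof (rule cg_mult)
    show "cg 4 (f1\<^sup>2 * f2) (f2 * phi * f2)"
      by (rule cg_mult[OF _ cg_refl]) (use eta_gauss Z in \<open>simp_all add: f1_def f2_def ZZ_phi\<close>)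
    show "cg 4 (((f2^2)^2)^a) ((f4^2)^a)" by (rule cg_power[OF c4b]) (use Z in simp_all)
  qed (use Z ZZ_phi in simp_all)
  have ZDen: "ZZ Den" "ZZ Den'" unfolding Den_def Den'_def using Z ZZ_phi by simp_all
  have zDen: "fps_nth Den 0 = 1" "fps_nth Den' 0 = 1" unfolding Den_def Den'_def
    using z phi0 by (simp_all add: fps_nth_power_0)
  have c1: "cg 4 (f4 ^ (2 * a + 1) * inverse Den) (f4 ^ (2 * a + 1) * inverse Den')"
    by (rule cg_mult[OF cg_refl cg_inverse[OF cDen]]) (use ZDen zDen Z ZZ_inverse in simp_all)
  define W where "W = KK * inverse phi"
  have u1: "inverse (f2^2) * f2^2 = 1" using z by (intro inverse_mult_eq_1) (simp add: fps_nth_power_0)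
  have u2: "inverse phi * phi = 1" using phi0 by (intro inverse_mult_eq_1) simp
  have u3: "Den' * inverse Den' = 1" using zDen by (intro inverse_mult_eq_1') simp
  have "W * Den' = (f4 * (f4^2)^a) * ((inverse (f2^2) * f2^2) * (inverse phi * phi))"
    unfolding W_def KK_def Den'_def f2_def f4_def by (simp add: power2_eq_square mult_ac)
  also have "\<dots> = f4 ^ (2 * a + 1)" unfolding u1 u2 by (simp add: power_mult)
  finally have "f4 ^ (2 * a + 1) * inverse Den' = W * (Den' * inverse Den')" by (simp add: mult.assoc)
  then have e2: "f4 ^ (2 * a + 1) * inverse Den' = KK * inverse phi" unfolding u3 W_def by simp
  have c2: "cg 4 (KK * inverse phi) (KK * phi)"
    by (rule cg_mult[OF cg_refl cg_inv_phi]) (use ZZ_KK ZZ_inverse phi0 ZZ_phi in simp_all)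
  have c3: "cg 4 (KK * phi) (KK - fps_const 2 * DD)"
  proof -
    have "cg 2 (KK * DD) (1 * DD)" by (rule cg_mult[OF KK_cg2 cg_refl]) (simp_all add: ZZ_DD)
    then have "cg 4 (fps_const 2 * (KK * DD)) (fps_const 2 * DD)" using cg2_times2 by fastforce
    then have "cg 4 (KK - fps_const 2 * (KK * DD)) (KK - fps_const 2 * DD)" by (intro cg_diff cg_refl)
    moreover have "KK * phi = KK - fps_const 2 * (KK * DD)" unfolding phi_def by (simp add: algebra_simps)
    ultimately show ?thesis by simp
  qed
  show ?thesis unfolding G eDen using cg_trans[OF cg_trans[OF c1[unfolded e2] c2] c3] .
qed

definition dn :: "nat \<Rightarrow> nat" where "dn n = card {d. d dvd n}"

lemma dn_parity:
  assumes "n > 0"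
  shows "odd (dn n) \<longleftrightarrow> (\<exists>k. n = k * k)"
proof -
  define S where "S = {d. d dvd n}"
  define A where "A = {d\<in>S. d * d < n}"
  define B where "B = {d\<in>S. n < d * d}"
  define C where "C = {d\<in>S. d * d = n}"
  have finS: "finite S" unfolding S_def using assms by simp
  have fin: "finite A" "finite B" "finite C" using finS by (simp_all add: A_def B_def C_def)
  have Seq: "S = A \<union> B \<union> C" unfolding A_def B_def C_def by auto
  have c1: "card (A \<union> B) = card A + card B"
    by (rule card_Un_disjoint) (use fin in \<open>auto simp: A_def B_def\<close>)
  have c2: "card (A \<union> B \<union> C) = card (A \<union> B) + card C"
    by (rule card_Un_disjoint) (use fin in \<open>auto simp: A_def B_def C_def\<close>)
  have cS: "card S = card A + card B + card C" unfolding Seq c2 c1 ..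
  have key: "n div (n div d) = d" "d * (n div d) = n" if "d \<in> S" for d
    using that assms by (auto simp: S_def)
  have sw: "n div d \<in> B" if "d \<in> A" for d
  proof -
    have dS: "d \<in> S" and lt: "d * d < n" using that by (auto simp: A_def)
    have e: "d * (n div d) = n" using key(2)[OF dS] .
    have "d * d < d * (n div d)" using lt e by simp
    then have "d < n div d" by simp
    then have "d * (n div d) < (n div d) * (n div d)" by simp
    then show ?thesis using e dS by (auto simp: B_def S_def)
  qed
  have sw2: "n div d \<in> A" if "d \<in> B" for d
  proof -
    have dS: "d \<in> S" and lt: "n < d * d" using that by (auto simp: B_def)
    have e: "d * (n div d) = n" using key(2)[OF dS] .
    have "d * (n div d) < d * d" using lt e by simp
    then have "n div d < d" by simp
    moreover have "0 < n div d" using e assms by (metis gr0I mult_0_right less_not_refl)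
    ultimately have "(n div d) * (n div d) < d * (n div d)" by simp
    then show ?thesis using e dS by (auto simp: A_def S_def)
  qed
  have inj: "inj_on (\<lambda>d. n div d) X" if "X \<subseteq> S" for X
    using that key(1) by (intro inj_onI) (metis subsetD)
  have "card A \<le> card B"
    by (rule card_inj_on_le[OF inj]) (use sw fin A_def in auto)
  moreover have "card B \<le> card A"
    by (rule card_inj_on_le[OF inj]) (use sw2 fin B_def in auto)
  ultimately have AB: "card A = card B" by simp
  have cC: "card C = (if \<exists>k. n = k * k then 1 else 0)"
  proof (cases "\<exists>k. n = k * k")
    case True
    then obtain k where k: "n = k * k" by blast
    have "C = {k}"
    proof
      show "{k} \<subseteq> C" using k by (auto simp: C_def S_def)
      show "C \<subseteq> {k}"
      proof
        fix d assume "d \<in> C"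
        then have "d * d = k * k" using k by (simp add: C_def)
        moreover have "d < k \<Longrightarrow> d * d < k * k" by (simp add: mult_strict_mono)
        moreover have "k < d \<Longrightarrow> k * k < d * d" by (simp add: mult_strict_mono)
        ultimately have "d = k" by (metis less_irrefl linorder_neqE_nat)
        then show "d \<in> {k}" by simp
      qed
    qed
    then show ?thesis using True by simp
  next
    case False
    then have "C = {}" by (auto simp: C_def)
    then show ?thesis using False by simp
  qed
  show ?thesis unfolding dn_def S_def[symmetric] cS AB cC by auto
qed

lemma sq_mod4: "(k * k) mod 4 = 0 \<or> (k * k) mod 4 = (1::nat)"
proof -
  have "k mod 4 < 4" by simp
  then have "k mod 4 = 0 \<or> k mod 4 = 1 \<or> k mod 4 = 2 \<or> k mod 4 = 3" by linarith
  moreover have "(k * k) mod 4 = ((k mod 4) * (k mod 4)) mod 4" by (simp add: mod_mult_eq)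
  ultimately show ?thesis by auto
qed

lemma dn_even23: assumes "n mod 4 = 2 \<or> n mod 4 = 3" shows "even (dn n)"
proof -
  have "n > 0" using assms by (auto intro: gr0I)
  moreover have "\<not> (\<exists>k. n = k * k)"
  proof
    assume "\<exists>k. n = k * k" then obtain k where "n = k * k" by blast
    then show False using assms sq_mod4[of k] by auto
  qed
  ultimately show ?thesis using dn_parity by blast
qed

lemma dn_4: assumes "l > 0" shows "even (dn (4 * l) + dn l)"
proof -
  have "(\<exists>k. 4 * l = k * k) \<longleftrightarrow> (\<exists>k. l = k * k)"
  proof
    assume "\<exists>k. 4 * l = k * k"
    then obtain k where k: "4 * l = k * k" by blast
    then have "even (k * k)" by (metis dvd_triv_left even_numeral dvd_trans)
    then have "even k" by simp
    then obtain j where "k = 2 * j" by (elim evenE)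
    then have "l = j * j" using k by simp
    then show "\<exists>k. l = k * k" by blast
  next
    assume "\<exists>k. l = k * k"
    then obtain k where "l = k * k" by blast
    then have "4 * l = (2 * k) * (2 * k)" by simp
    then show "\<exists>k. 4 * l = k * k" by blast
  qed
  then have "odd (dn (4 * l)) \<longleftrightarrow> odd (dn l)" using dn_parity assms by simp
  then show ?thesis by simp
qed


definition r4 :: "rat \<Rightarrow> rat \<Rightarrow> bool" where "r4 x y \<longleftrightarrow> (x - y) / 4 \<in> \<int>"

lemma r4_refl[simp]: "r4 x x" by (simp add: r4_def)
lemma r4_sym: "r4 x y \<Longrightarrow> r4 y x"
proof -
  assume "r4 x y"
  then have "- ((x - y) / 4) \<in> \<int>" unfolding r4_def by (rule Ints_minus)
  moreover have "- ((x - y) / 4) = (y - x) / 4" by (simp add: field_simps)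
  ultimately show ?thesis by (simp add: r4_def)
qed
lemma r4_trans: "r4 x y \<Longrightarrow> r4 y z \<Longrightarrow> r4 x z"
proof -
  assume "r4 x y" "r4 y z"
  then have "(x - y) / 4 + (y - z) / 4 \<in> \<int>" unfolding r4_def by (rule Ints_add)
  moreover have "(x - y) / 4 + (y - z) / 4 = (x - z) / 4" by (simp add: field_simps)
  ultimately show ?thesis by (simp add: r4_def)
qed
lemma r4_add: "r4 x y \<Longrightarrow> r4 (x + z) (y + z)" by (simp add: r4_def)
lemma r4_neg: "r4 x y \<Longrightarrow> r4 (- x) (- y)"
proof -
  assume "r4 x y"
  then have "r4 y x" by (rule r4_sym)
  moreover have "(- x - - y) = y - x" by simp
  ultimately show ?thesis unfolding r4_def by simp
qed
lemma r4_two: assumes "even (a + b)" shows "r4 (2 * of_nat a) (2 * of_nat b)"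
proof -
  obtain c where c: "a + b = 2 * c" using assms by (elim evenE)
  then have "(of_nat a :: rat) + of_nat b = 2 * of_nat c" by (metis of_nat_add of_nat_mult of_nat_numeral)
  then have e: "(of_nat b :: rat) = 2 * of_nat c - of_nat a" by (simp add: algebra_simps)
  have eq: "(2 * of_nat a - 2 * of_nat b) / 4 = (of_nat a - of_nat c :: rat)" unfolding e by (simp add: field_simps)
  have "(of_nat a - of_nat c :: rat) \<in> \<int>" by (intro Ints_diff Ints_of_nat)
  then show ?thesis unfolding r4_def eq .
qed
lemma cg_r4: "cg 4 A B \<Longrightarrow> r4 (fps_nth A n) (fps_nth B n)"
  using cg_iff_nth[of 4 A B] by (simp add: r4_def)

lemma DD_nth: "n > 0 \<Longrightarrow> fps_nth DD n = of_nat (dn n)" by (simp add: DD_def dn_def)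

lemma G_r4: assumes "i \<ge> 1"
  shows "r4 (abar (2 * i) N) ((if even N then fps_nth LL (N div 2) else 0) - 2 * fps_nth DD N)"
proof -
  have "r4 (abar (2 * i) N) (fps_nth (KK - fps_const 2 * DD) N)"
    unfolding abar_def using G_cg[OF assms] by (rule cg_r4)
  moreover have "fps_nth KK N = (if even N then fps_nth LL (N div 2) else 0)"
    unfolding dil_LL[symmetric] by (simp add: dil_def)
  ultimately show ?thesis by simp
qed

lemma LL_r4: "m > 0 \<Longrightarrow> r4 (fps_nth LL m) (- (2 * of_nat (dn m)))"
  using cg_r4[OF LL_cg, of m] by (simp add: phi_def DD_nth)

lemma claimA: assumes "i \<ge> 1" "N mod 4 = 3" shows "r4 (abar (2 * i) N) 0"
proof -
  have "N mod 2 = 1" using mod_mod_cancel[of 2 4 N] assms(2) by simp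
  then have odd: "odd N" by (simp add: odd_iff_mod_2_eq_one)
  have pos: "N > 0" using assms(2) by (auto intro: gr0I)
  have "r4 (abar (2 * i) N) (- (2 * of_nat (dn N)))" using G_r4[OF assms(1), of N] odd pos by (simp add: DD_nth)
  moreover have "r4 (- (2 * of_nat (dn N))) (- (2 * of_nat 0))"
    using dn_even23[of N] assms(2) by (intro r4_neg r4_two) simp
  ultimately show ?thesis by (simp add: r4_trans)
qed


lemma r4_sub2: "r4 u v \<Longrightarrow> r4 (x - u) (x - v)"
proof -
  assume "r4 u v"
  then have "r4 (- u + x) (- v + x)" by (intro r4_add r4_neg)
  then show ?thesis by simp
qed

lemma claimB: assumes "i \<ge> 1" "M > 0" shows "r4 (abar (2 * i) (2 * M)) (abar (2 * i) M)"
proof -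
  have "r4 (abar (2 * i) (2 * M)) (fps_nth LL M - 2 * of_nat (dn (2 * M)))"
    using G_r4[OF assms(1), of "2 * M"] assms(2) by (simp add: DD_nth)
  moreover have "r4 (fps_nth LL M - 2 * of_nat (dn (2 * M))) (- (2 * of_nat (dn M)) - 2 * of_nat (dn (2 * M)))"
    using LL_r4[OF assms(2)] by (simp add: r4_def diff_divide_distrib)
  ultimately have g2: "r4 (abar (2 * i) (2 * M)) (- (2 * of_nat (dn M)) - 2 * of_nat (dn (2 * M)))"
    by (rule r4_trans)
  show ?thesis
  proof (cases "even M")
    case False
    have gM: "r4 (abar (2 * i) M) (- (2 * of_nat (dn M)) - 2 * of_nat 0)"
      using G_r4[OF assms(1), of M] assms(2) False by (simp add: DD_nth)
    obtain q where q: "M = 2 * q + 1" using False by (elim oddE)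
    have "(2 * M) mod 4 = 2" using q by presburger
    then have "even (dn (2 * M) + 0)" using dn_even23 by simp
    then have "r4 (- (2 * of_nat (dn M)) - 2 * of_nat (dn (2 * M))) (- (2 * of_nat (dn M)) - 2 * of_nat 0)"
      by (intro r4_sub2 r4_two)
    then show ?thesis using r4_trans[OF r4_trans[OF g2] r4_sym[OF gM]] by blast
  next
    case True
    then obtain l where l: "M = 2 * l" by (elim evenE)
    then have lpos: "l > 0" using assms(2) by simp
    have "r4 (abar (2 * i) M) (fps_nth LL l - 2 * of_nat (dn (2 * l)))"
      using G_r4[OF assms(1), of M] assms(2) l by (simp add: DD_nth)
    moreover have "r4 (fps_nth LL l - 2 * of_nat (dn (2 * l))) (- (2 * of_nat (dn l)) - 2 * of_nat (dn (2 * l)))"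
      using LL_r4[OF lpos] by (simp add: r4_def diff_divide_distrib)
    ultimately have gM: "r4 (abar (2 * i) M) (- (2 * of_nat (dn l)) - 2 * of_nat (dn (2 * l)))"
      by (rule r4_trans)
    have "even (dn (4 * l) + dn l)" using dn_4[OF lpos] .
    then have "r4 (- (2 * of_nat (dn (2 * l))) - 2 * of_nat (dn (4 * l))) (- (2 * of_nat (dn (2 * l))) - 2 * of_nat (dn l))"
      by (intro r4_sub2 r4_two)
    moreover have "- (2 * of_nat (dn (2 * l))) - 2 * of_nat (dn l) = - (2 * of_nat (dn l)) - (2 * of_nat (dn (2 * l)) :: rat)"
      by simp
    ultimately have "r4 (- (2 * of_nat (dn M)) - 2 * of_nat (dn (2 * M))) (- (2 * of_nat (dn l)) - 2 * of_nat (dn (2 * l)))"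
      using l by (simp add: mult.assoc)
    then show ?thesis using r4_trans[OF r4_trans[OF g2] r4_sym[OF gM]] by blast
  qed
qed

theorem theorem1p6:
  fixes n i \<alpha> :: nat
  assumes "i \<ge> 1"
  shows "\<exists>m::int. abar (2 * i) (2 ^ \<alpha> * (4 * n + 3)) = 4 * of_int m"
proof -
  have "r4 (abar (2 * i) (2 ^ \<alpha> * (4 * n + 3))) 0"
  proof (induction \<alpha>)
    case 0
    show ?case using claimA[OF assms, of "4 * n + 3"] by simp
  next
    case (Suc a)
    have e: "2 ^ Suc a * (4 * n + 3) = 2 * (2 ^ a * (4 * n + 3))" by simp
    have "r4 (abar (2 * i) (2 * (2 ^ a * (4 * n + 3)))) (abar (2 * i) (2 ^ a * (4 * n + 3)))"
      using assms by (intro claimB) simp_all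
    then show ?case unfolding e using Suc.IH by (rule r4_trans)
  qed
  then have "abar (2 * i) (2 ^ \<alpha> * (4 * n + 3)) / 4 \<in> \<int>" by (simp add: r4_def)
  then obtain m where "abar (2 * i) (2 ^ \<alpha> * (4 * n + 3)) / 4 = of_int m" by (elim Ints_cases)
  then have "abar (2 * i) (2 ^ \<alpha> * (4 * n + 3)) = 4 * of_int m" by (simp add: field_simps)
  then show ?thesis by blast
qed

end
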